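(* Let $\mathfrak p=(p,q)\in\mathbb Z_+^2$ and $\Gamma=\Gamma_{\mathfrak p}$. Then $\bigcup_{j=1}^{pq}B_j^\Gamma=[-4,4]$ and $\max B_j^\Gamma\ge\min B_{j+1}^\Gamma$ for every $1\le j<pq$.
   Context: For $r\ge3$ and $\theta\in\mathbb R$, $\Delta_\theta^r\in\mathbb C^{r\times r}$ is the Hermitian matrix with $1$ on the sub- and superdiagonals, $0$ on the diagonal, entry $e^{-i\theta}$ in position $(1,r)$ and $e^{i\theta}$ in position $(r,1)$, all other entries $0$; $\Delta_\theta^1=2\cos\theta$, $\Delta_\theta^2=\begin{bmatrix}0&1+e^{-i\theta}\\1+e^{i\theta}&0\end{bmatrix}$. $\Gamma_{\mathfrak p}=([0,p)\times[0,q))\cap\mathbb Z^2$, $\Delta^{\Gamma}_{\theta,\varphi}=\Delta_\theta^p\otimes I_q+I_p\otimes\Delta_\varphi^q$, with ordered eigenvalues $\lambda_1^\Gamma(\theta,\varphi)\le\cdots\le\lambda_{pq}^\Gamma(\theta,\varphi)$ and bands $B_j^\Gamma=\{\lambda_j^\Gamma(\theta,\varphi):(\theta,\varphi)\in[0,\pi]^2\}$. *)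

theory Defs
  imports "HOL-Analysis.Analysis" "Jordan_Normal_Form.Char_Poly"
    "HOL-Computational_Algebra.Polynomial"
begin

definition Delta :: "nat \<Rightarrow> real \<Rightarrow> complex mat" where
  "Delta r \<theta> =
    (if r = 1 then mat 1 1 (\<lambda>_. complex_of_real (2 * cos \<theta>))
     else if r = 2 then mat 2 2 (\<lambda>(i,j).
        if i = 0 \<and> j = 1 then 1 + cis (- \<theta>)
        else if i = 1 \<and> j = 0 then 1 + cis \<theta> else 0)
     else mat r r (\<lambda>(i,j).
        if j = i + 1 \<or> i = j + 1 then 1
        else if i = 0 \<and> j = r - 1 then cis (- \<theta>)
        else if i = r - 1 \<and> j = 0 then cis \<theta> else 0))"

text \<open>Kronecker product; row index (a,b) of A \<otimes> B is encoded as a * dim_row B + b.\<close>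
definition kron :: "complex mat \<Rightarrow> complex mat \<Rightarrow> complex mat" where
  "kron A B = mat (dim_row A * dim_row B) (dim_col A * dim_col B)
     (\<lambda>(i,j). A $$ (i div dim_row B, j div dim_col B) * B $$ (i mod dim_row B, j mod dim_col B))"

definition DeltaGamma :: "nat \<Rightarrow> nat \<Rightarrow> real \<Rightarrow> real \<Rightarrow> complex mat" where
  "DeltaGamma p q \<theta> \<phi> = kron (Delta p \<theta>) (1\<^sub>m q) + kron (1\<^sub>m p) (Delta q \<phi>)"

text \<open>Eigenvalues of a (Hermitian, hence real-spectrum) matrix, listed with algebraic
  multiplicity in nondecreasing order: the roots of the characteristic polynomial.\<close>
definition ordered_eigenvalues :: "complex mat \<Rightarrow> real list" where
  "ordered_eigenvalues A = sorted_list_of_multiset (image_mset Re (proots (char_poly A)))"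

definition lam :: "nat \<Rightarrow> nat \<Rightarrow> nat \<Rightarrow> real \<Rightarrow> real \<Rightarrow> real" where
  "lam p q j \<theta> \<phi> = ordered_eigenvalues (DeltaGamma p q \<theta> \<phi>) ! (j - 1)"

definition band :: "nat \<Rightarrow> nat \<Rightarrow> nat \<Rightarrow> real set" where
  "band p q j = {lam p q j \<theta> \<phi> | \<theta> \<phi>. \<theta> \<in> {0..pi} \<and> \<phi> \<in> {0..pi}}"

end

theory Submission
  imports Defs
begin


lemma Delta_carrier: "r \<ge> 1 \<Longrightarrow> Delta r \<theta> \<in> carrier_mat r r"
  unfolding Delta_def by auto

lemma Delta_entry3:
  assumes "r \<ge> 3" "i < r" "j < r"
  shows "Delta r \<theta> $$ (i,j) = (if j = i+1 then 1 else 0) + (if i = j+1 then 1 else 0)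
     + (if i = 0 \<and> j = r-1 then cis (-\<theta>) else 0) + (if i = r-1 \<and> j = 0 then cis \<theta> else 0)"
  using assms unfolding Delta_def by auto

lemma Delta1_entry: "Delta 1 \<theta> $$ (0,0) = complex_of_real (2*cos \<theta>)" "Delta (Suc 0) \<theta> $$ (0,0) = complex_of_real (2*cos \<theta>)"
  by (simp_all add: Delta_def)

lemma Delta2_entries0: "Delta 2 \<theta> $$ (0,0) = 0" "Delta 2 \<theta> $$ (0,1) = 1 + cis (-\<theta>)"
   "Delta 2 \<theta> $$ (1,0) = 1 + cis \<theta>" "Delta 2 \<theta> $$ (1,1) = 0"
  by (simp_all add: Delta_def)

lemma Delta2_entries: "Delta 2 \<theta> $$ (0,0) = 0" "Delta 2 \<theta> $$ (0,1) = 1 + cis (-\<theta>)"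
   "Delta 2 \<theta> $$ (1,0) = 1 + cis \<theta>" "Delta 2 \<theta> $$ (1,1) = 0"
   "Delta 2 \<theta> $$ (0,Suc 0) = 1 + cis (-\<theta>)" "Delta 2 \<theta> $$ (Suc 0,0) = 1 + cis \<theta>" "Delta 2 \<theta> $$ (Suc 0,Suc 0) = 0"
   "Delta (Suc (Suc 0)) \<theta> $$ (0,0) = 0" "Delta (Suc (Suc 0)) \<theta> $$ (0,Suc 0) = 1 + cis (-\<theta>)"
   "Delta (Suc (Suc 0)) \<theta> $$ (Suc 0,0) = 1 + cis \<theta>" "Delta (Suc (Suc 0)) \<theta> $$ (Suc 0,Suc 0) = 0"
  using Delta2_entries0 by (simp_all only: One_nat_def numeral_2_eq_2)

lemma cis_2cos: "cis a + cis (-a) = complex_of_real (2 * cos a)"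
  by (simp add: complex_eq_iff cis.ctr)


lemma Delta_dims[simp]: "r \<ge> 1 \<Longrightarrow> dim_row (Delta r \<theta>) = r" "r \<ge> 1 \<Longrightarrow> dim_col (Delta r \<theta>) = r"
  by (metis carrier_matD Delta_carrier)+

lemma cos_cis: "complex_of_real (2*cos a) * cis x = cis (x + a) + cis (x - a)"
  by (simp add: complex_eq_iff cis.ctr cos_add cos_diff sin_add sin_diff algebra_simps)

lemma Delta_eig:
  assumes r: "r \<ge> 1" and c: "cis (real r * \<alpha>) = cis \<theta>"
  shows "Delta r \<theta> *\<^sub>v vec r (\<lambda>m. cis (real m * \<alpha>)) = complex_of_real (2*cos \<alpha>) \<cdot>\<^sub>v vec r (\<lambda>m. cis (real m * \<alpha>))"
proof (rule eq_vecI)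
  show "dim_vec (Delta r \<theta> *\<^sub>v vec r (\<lambda>m. cis (real m * \<alpha>))) = dim_vec (complex_of_real (2*cos \<alpha>) \<cdot>\<^sub>v vec r (\<lambda>m. cis (real m * \<alpha>)))"
    using r by simp
  fix i assume "i < dim_vec (complex_of_real (2*cos \<alpha>) \<cdot>\<^sub>v vec r (\<lambda>m. cis (real m * \<alpha>)))"
  hence i: "i < r" by simp
  have c1: "cis (real r * \<alpha>) * cis (-\<theta>) = 1" using c by (simp add: cis_mult)
  consider "r = 1" | "r = 2" | "r \<ge> 3" using r by linarith
  then show "(Delta r \<theta> *\<^sub>v vec r (\<lambda>m. cis (real m * \<alpha>))) $ i = (complex_of_real (2*cos \<alpha>) \<cdot>\<^sub>v vec r (\<lambda>m. cis (real m * \<alpha>))) $ i"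
  proof cases
    case 1
    have "cos \<theta> = cos \<alpha>" using c 1 by (metis cis.sel(1) of_nat_1 mult_1)
    then show ?thesis using i 1 by (simp add: Delta1_entry scalar_prod_def)
  next
    case 2
    have e: "(Delta r \<theta> *\<^sub>v vec r (\<lambda>m. cis (real m * \<alpha>))) $ i
       = (\<Sum>j\<in>{0..<2}. Delta r \<theta> $$ (i,j) * cis (real j * \<alpha>))"
      using r i 2 by (simp add: scalar_prod_def)
    have c2: "cis \<theta> = cis (2*\<alpha>)" using c 2 by simp
    have c3: "cis (-\<theta>) * cis \<alpha> = cis (-\<alpha>)"
    proof -
      have "cis (-\<theta>) * cis \<alpha> = cis (-\<theta>) * cis (2*\<alpha>) * cis (-\<alpha>)" by (simp add: cis_mult)
      also have "\<dots> = cis (-\<alpha>)" using c1 2 by (simp add: mult.commute)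
      finally show ?thesis .
    qed
    have "i = 0 \<or> i = 1" using i 2 by auto
    then show ?thesis
    proof
      assume i0: "i = 0"
      show ?thesis unfolding e using i0 2 c3 cis_2cos[of \<alpha>] by (simp add: Delta2_entries distrib_right numeral_2_eq_2)
    next
      assume i1: "i = 1"
      have "complex_of_real (2*cos \<alpha>) * cis \<alpha> = cis (\<alpha>+\<alpha>) + cis (\<alpha> - \<alpha>)" by (rule cos_cis)
      then show ?thesis unfolding e using i1 2 c2 by (simp add: Delta2_entries cis_mult[symmetric] add.commute numeral_2_eq_2)
    qed
  next
    case 3
    have "(Delta r \<theta> *\<^sub>v vec r (\<lambda>m. cis (real m * \<alpha>))) $ i
       = (\<Sum>j\<in>{0..<r}. Delta r \<theta> $$ (i,j) * cis (real j * \<alpha>))"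
      using r i by (simp add: scalar_prod_def)
    also have "\<dots> = (\<Sum>j\<in>{0..<r}. (if j = i+1 then cis (real j * \<alpha>) else 0) + (if j = i - 1 \<and> i \<noteq> 0 then cis (real j * \<alpha>) else 0)
     + (if j = r-1 \<and> i = 0 then cis (-\<theta>) * cis (real j * \<alpha>) else 0) + (if j = 0 \<and> i = r-1 then cis \<theta> * cis (real j * \<alpha>) else 0))"
      using 3 by (intro sum.cong, simp, subst Delta_entry3[OF 3 i], auto)
    also have "\<dots> = (if i+1 < r then cis (real (i+1) * \<alpha>) else 0) + (if i \<noteq> 0 then cis (real (i-1) * \<alpha>) else 0)
       + (if i = 0 then cis (-\<theta>) * cis (real (r-1) * \<alpha>) else 0) + (if i = r-1 then cis \<theta> else 0)"
      using i 3 by (simp add: sum.distrib sum.delta') arith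
    also have "\<dots> = complex_of_real (2*cos \<alpha>) * cis (real i * \<alpha>)"
    proof -
      have ci: "cis \<theta> = cis (real r * \<alpha>)" using c by simp
      consider "i = 0" | "i = r - 1" | "0 < i \<and> i < r - 1" using i by linarith
      then show ?thesis
      proof cases
        case 1
        have "cis (-\<theta>) * cis (real (r-1) * \<alpha>) = cis (-\<theta>) * cis (real r * \<alpha>) * cis (-\<alpha>)"
          using 3 by (simp add: cis_mult of_nat_diff algebra_simps)
        also have "\<dots> = cis (-\<alpha>)" using c1 by (simp add: mult.commute)
        finally show ?thesis using 1 3 cis_2cos[of \<alpha>] by simp
      next
        case 2
        have "cis \<theta> = cis (real (r-1) * \<alpha> + \<alpha>)" using ci 3 by (simp add: of_nat_diff algebra_simps)
        moreover have "complex_of_real (2*cos \<alpha>) * cis (real (r-1) * \<alpha>) = cis (real (r-1) * \<alpha> + \<alpha>) + cis (real (r-1) * \<alpha> - \<alpha>)"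
          by (rule cos_cis)
        moreover have "real (r-1-1) * \<alpha> = real (r-1) * \<alpha> - \<alpha>" using 3 by (simp add: of_nat_diff algebra_simps)
        ultimately show ?thesis using 2 3 by simp
      next
        case 4: 3
        moreover have "complex_of_real (2*cos \<alpha>) * cis (real i * \<alpha>) = cis (real i * \<alpha> + \<alpha>) + cis (real i * \<alpha> - \<alpha>)"
          by (rule cos_cis)
        moreover have "real (i-1) * \<alpha> = real i * \<alpha> - \<alpha>" "real (i+1) * \<alpha> = real i * \<alpha> + \<alpha>"
          using 4 by (auto simp add: of_nat_diff algebra_simps)
        moreover have "i+1 < r" "i \<noteq> 0" "i \<noteq> r - 1" using 4 by auto
        ultimately show ?thesis by (simp add: add.commute)
      qed
    qed
    finally show ?thesis using i by simp
  qed
qed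



lemma sum_split_prod: "(\<Sum>j\<in>{0..<p*q}. f j) = (\<Sum>a\<in>{0..<p}. \<Sum>b\<in>{0..<q}. f (a*q+b))" for p q :: nat
proof (induction p)
  case 0 then show ?case by simp
next
  case (Suc p)
  have "{0..<Suc p * q} = {0..<p*q} \<union> {p*q..<p*q+q}" by auto
  hence "(\<Sum>j\<in>{0..<Suc p*q}. f j) = (\<Sum>j\<in>{0..<p*q}. f j) + (\<Sum>j\<in>{p*q..<p*q+q}. f j)"
    by (simp add: sum.union_disjoint ivl_disj_int_two(3))
  also have "(\<Sum>j\<in>{p*q..<p*q+q}. f j) = (\<Sum>b\<in>{0..<q}. f (p*q+b))"
    using sum.shift_bounds_nat_ivl[of f 0 "p*q" q] by (simp add: add.commute)
  finally show ?case using Suc by simp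
qed

definition kv :: "complex vec \<Rightarrow> complex vec \<Rightarrow> complex vec" where
  "kv x y = vec (dim_vec x * dim_vec y) (\<lambda>i. x $ (i div dim_vec y) * y $ (i mod dim_vec y))"

lemma kron_dims[simp]: "dim_row (kron A B) = dim_row A * dim_row B" "dim_col (kron A B) = dim_col A * dim_col B"
  by (auto simp: kron_def)

lemma kron_index: "i < dim_row A * dim_row B \<Longrightarrow> j < dim_col A * dim_col B \<Longrightarrow>
  kron A B $$ (i,j) = A $$ (i div dim_row B, j div dim_col B) * B $$ (i mod dim_row B, j mod dim_col B)"
  by (simp add: kron_def)

lemma ab_lt: "a < p \<Longrightarrow> b < q \<Longrightarrow> a*q+b < p*(q::nat)"
proof -
  assume "a < p" "b < q"
  hence "(a+1)*q \<le> p*q" by (intro mult_le_mono1) simp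
  thus ?thesis using \<open>b < q\<close> by simp
qed

lemma divmod_q: "b < (q::nat) \<Longrightarrow> (a*q+b) div q = a" "b < (q::nat) \<Longrightarrow> (a*q+b) mod q = b"
  by auto

lemma kron1_mult:
  assumes A: "A \<in> carrier_mat p p" and x: "dim_vec x = p" and q: "dim_vec y = q"
  shows "kron A (1\<^sub>m q) *\<^sub>v kv x y = kv (A *\<^sub>v x) y"
proof (rule eq_vecI)
  show "dim_vec (kron A (1\<^sub>m q) *\<^sub>v kv x y) = dim_vec (kv (A *\<^sub>v x) y)" using A x q by (simp add: kv_def)
  fix i assume "i < dim_vec (kv (A *\<^sub>v x) y)"
  hence i: "i < p*q" using A q by (simp add: kv_def)
  hence qp: "q > 0" by (cases q) auto
  have idq: "i div q < p" using i by (simp add: less_mult_imp_div_less)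
  have imq: "i mod q < q" using qp by simp
  have "(kron A (1\<^sub>m q) *\<^sub>v kv x y) $ i = (\<Sum>j\<in>{0..<p*q}. kron A (1\<^sub>m q) $$ (i,j) * kv x y $ j)"
    using A i x q by (simp add: scalar_prod_def kv_def)
  also have "\<dots> = (\<Sum>a\<in>{0..<p}. \<Sum>b\<in>{0..<q}. kron A (1\<^sub>m q) $$ (i,a*q+b) * kv x y $ (a*q+b))"
    by (rule sum_split_prod)
  also have "\<dots> = (\<Sum>a\<in>{0..<p}. \<Sum>b\<in>{0..<q}. if b = i mod q then A $$ (i div q, a) * x $ a * y $ (i mod q) else 0)"
  proof (intro sum.cong refl)
    fix a b assume a: "a \<in> {0..<p}" and b: "b \<in> {0..<q}"
    have ab: "a*q+b < p*q" using a b by (simp add: ab_lt)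
    show "kron A (1\<^sub>m q) $$ (i,a*q+b) * kv x y $ (a*q+b) = (if b = i mod q then A $$ (i div q, a) * x $ a * y $ (i mod q) else 0)"
      using A a b ab i x q imq by (simp add: kron_index kv_def divmod_q)
  qed
  also have "\<dots> = (\<Sum>a\<in>{0..<p}. A $$ (i div q, a) * x $ a) * y $ (i mod q)"
    using imq by (simp add: sum.delta sum_distrib_right)
  also have "\<dots> = (kv (A *\<^sub>v x) y) $ i"
    using A i x q idq by (simp add: kv_def scalar_prod_def)
  finally show "(kron A (1\<^sub>m q) *\<^sub>v kv x y) $ i = (kv (A *\<^sub>v x) y) $ i" .
qed

lemma kron2_mult:
  assumes B: "B \<in> carrier_mat q q" and x: "dim_vec x = p" and q: "dim_vec y = q"
  shows "kron (1\<^sub>m p) B *\<^sub>v kv x y = kv x (B *\<^sub>v y)"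
proof (rule eq_vecI)
  show "dim_vec (kron (1\<^sub>m p) B *\<^sub>v kv x y) = dim_vec (kv x (B *\<^sub>v y))" using B x q by (simp add: kv_def)
  fix i assume "i < dim_vec (kv x (B *\<^sub>v y))"
  hence i: "i < p*q" using B x by (simp add: kv_def)
  hence qp: "q > 0" by (cases q) auto
  have idq: "i div q < p" using i by (simp add: less_mult_imp_div_less)
  have imq: "i mod q < q" using qp by simp
  have "(kron (1\<^sub>m p) B *\<^sub>v kv x y) $ i = (\<Sum>j\<in>{0..<p*q}. kron (1\<^sub>m p) B $$ (i,j) * kv x y $ j)"
    using B i x q by (simp add: scalar_prod_def kv_def)
  also have "\<dots> = (\<Sum>a\<in>{0..<p}. \<Sum>b\<in>{0..<q}. kron (1\<^sub>m p) B $$ (i,a*q+b) * kv x y $ (a*q+b))"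
    by (rule sum_split_prod)
  also have "\<dots> = (\<Sum>a\<in>{0..<p}. if a = i div q then (\<Sum>b\<in>{0..<q}. x $ (i div q) * (B $$ (i mod q, b) * y $ b)) else 0)"
  proof (intro sum.cong refl)
    fix a assume a: "a \<in> {0..<p}"
    show "(\<Sum>b\<in>{0..<q}. kron (1\<^sub>m p) B $$ (i,a*q+b) * kv x y $ (a*q+b)) = (if a = i div q then (\<Sum>b\<in>{0..<q}. x $ (i div q) * (B $$ (i mod q, b) * y $ b)) else 0)"
    proof (cases "a = i div q")
      case True
      have "(\<Sum>b\<in>{0..<q}. kron (1\<^sub>m p) B $$ (i,i div q*q+b) * kv x y $ (i div q*q+b)) = (\<Sum>b\<in>{0..<q}. x $ (i div q) * (B $$ (i mod q, b) * y $ b))"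
      proof (intro sum.cong refl)
        fix b assume b: "b \<in> {0..<q}"
        have ab: "a*q+b < p*q" using a b by (simp add: ab_lt)
        show "kron (1\<^sub>m p) B $$ (i,i div q*q+b) * kv x y $ (i div q*q+b) = x $ (i div q) * (B $$ (i mod q, b) * y $ b)"
          using B a b ab i x q imq idq True by (simp add: kron_index kv_def divmod_q)
      qed
      thus ?thesis using True by simp
    next
      case False
      have "(\<Sum>b\<in>{0..<q}. kron (1\<^sub>m p) B $$ (i,a*q+b) * kv x y $ (a*q+b)) = 0"
      proof (intro sum.neutral ballI)
        fix b assume b: "b \<in> {0..<q}"
        have ab: "a*q+b < p*q" using a b by (simp add: ab_lt)
        show "kron (1\<^sub>m p) B $$ (i,a*q+b) * kv x y $ (a*q+b) = 0"
          using B a b ab i x q imq idq False by (simp add: kron_index kv_def divmod_q)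
      qed
      thus ?thesis using False by simp
    qed
  qed
  also have "\<dots> = x $ (i div q) * (\<Sum>b\<in>{0..<q}. B $$ (i mod q, b) * y $ b)"
    using idq by (simp add: sum.delta sum_distrib_left)
  also have "\<dots> = (kv x (B *\<^sub>v y)) $ i"
    using B i x q imq by (simp add: kv_def scalar_prod_def)
  finally show "(kron (1\<^sub>m p) B *\<^sub>v kv x y) $ i = (kv x (B *\<^sub>v y)) $ i" .
qed



lemma gersh:
  fixes A :: "complex mat" and v :: "complex vec"
  assumes A: "A \<in> carrier_mat n n" and v: "v \<in> carrier_vec n" "v \<noteq> 0\<^sub>v n"
    and ev: "A *\<^sub>v v = z \<cdot>\<^sub>v v"
    and rs: "\<And>i. i < n \<Longrightarrow> (\<Sum>j\<in>{0..<n}. norm (A $$ (i,j))) \<le> B"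
  shows "norm z \<le> B"
proof -
  have "\<exists>k<n. v $ k \<noteq> 0"
  proof (rule ccontr)
    assume "\<not> (\<exists>k<n. v $ k \<noteq> 0)"
    hence "v = 0\<^sub>v n" using v(1) by (intro eq_vecI) auto
    with v(2) show False by simp
  qed
  then obtain k where k: "k < n" "v $ k \<noteq> 0" by blast
  define M where "M = Max ((\<lambda>i. norm (v $ i)) ` {0..<n})"
  have fin: "finite ((\<lambda>i. norm (v $ i)) ` {0..<n})" "(\<lambda>i. norm (v $ i)) ` {0..<n} \<noteq> {}" using k by auto
  obtain i0 where i0: "i0 < n" "norm (v $ i0) = M"
    using Max_in[OF fin] unfolding M_def by auto
  have Mge: "\<And>j. j < n \<Longrightarrow> norm (v $ j) \<le> M" unfolding M_def using fin by auto
  have "norm (v $ k) > 0" using k(2) by simp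
  hence Mpos: "M > 0" using Mge[OF k(1)] by linarith
  have "z * v $ i0 = (A *\<^sub>v v) $ i0" using ev i0 v by simp
  also have "\<dots> = (\<Sum>j\<in>{0..<n}. A $$ (i0,j) * v $ j)" using A v i0 by (simp add: scalar_prod_def)
  finally have eq: "z * v $ i0 = (\<Sum>j\<in>{0..<n}. A $$ (i0,j) * v $ j)" .
  have "norm z * M = norm (z * v $ i0)" using i0 by (simp add: norm_mult)
  also have "\<dots> \<le> (\<Sum>j\<in>{0..<n}. norm (A $$ (i0,j) * v $ j))" unfolding eq by (rule norm_sum)
  also have "\<dots> \<le> (\<Sum>j\<in>{0..<n}. norm (A $$ (i0,j)) * M)"
  proof (intro sum_mono)
    fix j assume "j \<in> {0..<n}"
    hence "norm (v $ j) \<le> M" using Mge by simp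
    thus "norm (A $$ (i0,j) * v $ j) \<le> norm (A $$ (i0,j)) * M" by (simp add: norm_mult mult_left_mono)
  qed
  also have "\<dots> = (\<Sum>j\<in>{0..<n}. norm (A $$ (i0,j))) * M" by (simp add: sum_distrib_right)
  also have "\<dots> \<le> B * M" using rs[OF i0(1)] Mpos by (simp add: mult_right_mono)
  finally show ?thesis using Mpos by simp
qed

lemma kron1_rowsum:
  assumes A: "A \<in> carrier_mat p p" and i: "i < p*q"
  shows "(\<Sum>j\<in>{0..<p*q}. norm (kron A (1\<^sub>m q) $$ (i,j))) = (\<Sum>a\<in>{0..<p}. norm (A $$ (i div q, a)))"
proof -
  have qp: "q > 0" using i by (cases q) auto
  have imq: "i mod q < q" using qp by simp
  have "(\<Sum>j\<in>{0..<p*q}. norm (kron A (1\<^sub>m q) $$ (i,j))) = (\<Sum>a\<in>{0..<p}. \<Sum>b\<in>{0..<q}. norm (kron A (1\<^sub>m q) $$ (i,a*q+b)))"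
    by (rule sum_split_prod)
  also have "\<dots> = (\<Sum>a\<in>{0..<p}. \<Sum>b\<in>{0..<q}. if b = i mod q then norm (A $$ (i div q, a)) else 0)"
  proof (intro sum.cong refl)
    fix a b assume a: "a \<in> {0..<p}" and b: "b \<in> {0..<q}"
    have ab: "a*q+b < p*q" using a b by (simp add: ab_lt)
    show "norm (kron A (1\<^sub>m q) $$ (i,a*q+b)) = (if b = i mod q then norm (A $$ (i div q, a)) else 0)"
      using A a b ab i imq by (simp add: kron_index divmod_q)
  qed
  also have "\<dots> = (\<Sum>a\<in>{0..<p}. norm (A $$ (i div q, a)))"
    using imq by (simp add: sum.delta)
  finally show ?thesis .
qed

lemma kron2_rowsum:
  assumes B: "B \<in> carrier_mat q q" and i: "i < p*q"
  shows "(\<Sum>j\<in>{0..<p*q}. norm (kron (1\<^sub>m p) B $$ (i,j))) = (\<Sum>b\<in>{0..<q}. norm (B $$ (i mod q, b)))"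
proof -
  have qp: "q > 0" using i by (cases q) auto
  have imq: "i mod q < q" using qp by simp
  have idq: "i div q < p" using i by (simp add: less_mult_imp_div_less)
  have "(\<Sum>j\<in>{0..<p*q}. norm (kron (1\<^sub>m p) B $$ (i,j))) = (\<Sum>a\<in>{0..<p}. \<Sum>b\<in>{0..<q}. norm (kron (1\<^sub>m p) B $$ (i,a*q+b)))"
    by (rule sum_split_prod)
  also have "\<dots> = (\<Sum>a\<in>{0..<p}. if a = i div q then (\<Sum>b\<in>{0..<q}. norm (B $$ (i mod q, b))) else 0)"
  proof (intro sum.cong refl)
    fix a assume a: "a \<in> {0..<p}"
    have "(\<Sum>b\<in>{0..<q}. norm (kron (1\<^sub>m p) B $$ (i,a*q+b))) = (\<Sum>b\<in>{0..<q}. if a = i div q then norm (B $$ (i mod q, b)) else 0)"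
    proof (intro sum.cong refl)
      fix b assume b: "b \<in> {0..<q}"
      have ab: "a*q+b < p*q" using a b by (simp add: ab_lt)
      show "norm (kron (1\<^sub>m p) B $$ (i,a*q+b)) = (if a = i div q then norm (B $$ (i mod q, b)) else 0)"
        using B a b ab i imq idq by (simp add: kron_index divmod_q)
    qed
    thus "(\<Sum>b\<in>{0..<q}. norm (kron (1\<^sub>m p) B $$ (i,a*q+b))) = (if a = i div q then (\<Sum>b\<in>{0..<q}. norm (B $$ (i mod q, b))) else 0)"
      by simp
  qed
  also have "\<dots> = (\<Sum>b\<in>{0..<q}. norm (B $$ (i mod q, b)))"
    using idq by (simp add: sum.delta)
  finally show ?thesis .
qed

lemma nif: "norm (c::complex) = 1 \<Longrightarrow> norm (if P then c else 0) = (if P then 1 else 0)"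
  by simp

lemma Delta_rowsum:
  assumes r: "r \<ge> 1" and i: "i < r"
  shows "(\<Sum>j\<in>{0..<r}. norm (Delta r \<theta> $$ (i,j))) \<le> 2"
proof -
  consider "r = 1" | "r = 2" | "r \<ge> 3" using r by linarith
  then show ?thesis
  proof cases
    case 1
    have d: "Delta r \<theta> $$ (i,0) = complex_of_real (2*cos \<theta>)" using 1 i Delta1_entry by simp
    have "\<bar>cos \<theta>\<bar> \<le> 1" by simp
    then show ?thesis using 1 i d by (simp add: abs_mult)
  next
    case 2
    have n: "norm (1 + cis t) \<le> 2" for t
      using norm_triangle_ineq[of 1 "cis t"] by simp
    have e: "(\<Sum>j\<in>{0..<r}. norm (Delta r \<theta> $$ (i,j))) = norm (Delta r \<theta> $$ (i,0)) + norm (Delta r \<theta> $$ (i,1))"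
      using 2 by (simp add: numeral_2_eq_2)
    have "i = 0 \<or> i = 1" using i 2 by auto
    then show ?thesis
    proof
      assume "i = 0" thus ?thesis unfolding e using 2 n[of "-\<theta>"] by (simp add: Delta2_entries)
    next
      assume "i = 1" thus ?thesis unfolding e using 2 n[of "\<theta>"] by (simp add: Delta2_entries)
    qed
  next
    case 3
    have "(\<Sum>j\<in>{0..<r}. norm (Delta r \<theta> $$ (i,j))) \<le> (\<Sum>j\<in>{0..<r}. (if j = i+1 then 1 else 0) + (if i = j+1 then 1 else 0)
     + (if i = 0 \<and> j = r-1 then 1 else 0) + (if i = r-1 \<and> j = 0 then 1 else (0::real)))"
    proof (intro sum_mono)
      fix j assume j: "j \<in> {0..<r}"
      have "norm (Delta r \<theta> $$ (i,j)) \<le> norm ((if j = i+1 then 1 else 0) + (if i = j+1 then 1 else 0)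
     + (if i = 0 \<and> j = r-1 then cis (-\<theta>) else 0)) + norm (if i = r-1 \<and> j = 0 then cis \<theta> else (0::complex))"
      proof -
        have j': "j < r" using j by simp
        show ?thesis unfolding Delta_entry3[OF 3 i j'] by (rule norm_triangle_ineq)
      qed
      also have "\<dots> \<le> norm ((if j = i+1 then 1 else 0) + (if i = j+1 then 1 else (0::complex)))
     + norm (if i = 0 \<and> j = r-1 then cis (-\<theta>) else (0::complex)) + norm (if i = r-1 \<and> j = 0 then cis \<theta> else (0::complex))"
        by (rule add_right_mono, rule norm_triangle_ineq)
      also have "\<dots> \<le> norm (if j = i+1 then 1 else (0::complex)) + norm (if i = j+1 then 1 else (0::complex))
     + norm (if i = 0 \<and> j = r-1 then cis (-\<theta>) else (0::complex)) + norm (if i = r-1 \<and> j = 0 then cis \<theta> else (0::complex))"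
        by (intro add_right_mono norm_triangle_ineq)
      also have "\<dots> = (if j = i+1 then 1 else 0) + (if i = j+1 then 1 else 0)
     + (if i = 0 \<and> j = r-1 then 1 else 0) + (if i = r-1 \<and> j = 0 then 1 else (0::real))"
        by (simp only: nif norm_one norm_cis)
      finally show "norm (Delta r \<theta> $$ (i,j)) \<le> (if j = i+1 then 1 else 0) + (if i = j+1 then 1 else 0)
     + (if i = 0 \<and> j = r-1 then 1 else 0) + (if i = r-1 \<and> j = 0 then 1 else (0::real))" .
    qed
    also have "\<dots> = (\<Sum>j\<in>{0..<r}. (if j = i+1 then 1 else 0) + (if j = i - 1 \<and> i \<noteq> 0 then 1 else 0)
     + (if j = r-1 \<and> i = 0 then 1 else 0) + (if j = 0 \<and> i = r-1 then 1 else (0::real)))"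
    proof (intro sum.cong refl)
      fix j :: nat
      have e1: "(i = j+1) = (j = i - 1 \<and> i \<noteq> 0)" by arith
      have e2: "(i = 0 \<and> j = r-1) = (j = r-1 \<and> i = 0)" "(i = r-1 \<and> j = 0) = (j = 0 \<and> i = r-1)" by blast+
      show "(if j = i+1 then 1 else 0) + (if i = j+1 then 1 else 0)
     + (if i = 0 \<and> j = r-1 then 1 else 0) + (if i = r-1 \<and> j = 0 then 1 else (0::real)) =
        (if j = i+1 then 1 else 0) + (if j = i - 1 \<and> i \<noteq> 0 then 1 else 0)
     + (if j = r-1 \<and> i = 0 then 1 else 0) + (if j = 0 \<and> i = r-1 then 1 else (0::real))"
        by (simp only: e1 e2)
    qed
    also have "\<dots> = (if i+1 < r then 1 else 0) + (if i \<noteq> 0 then 1 else 0)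
       + (if i = 0 then 1 else 0) + (if i = r-1 then 1 else 0)"
      using i 3 by (simp add: sum.distrib sum.delta')
    also have "\<dots> \<le> 2" using i 3 by auto
    finally show ?thesis .
  qed
qed



lemma kron_carrier: "A \<in> carrier_mat a a \<Longrightarrow> B \<in> carrier_mat b b \<Longrightarrow> kron A B \<in> carrier_mat (a*b) (a*b)"
  unfolding carrier_mat_def by simp

lemma DG_carrier: "p \<ge> 1 \<Longrightarrow> q \<ge> 1 \<Longrightarrow> DeltaGamma p q \<theta> \<phi> \<in> carrier_mat (p*q) (p*q)"
proof -
  assume p: "p \<ge> 1" and q: "q \<ge> 1"
  have a: "kron (Delta p \<theta>) (1\<^sub>m q) \<in> carrier_mat (p*q) (p*q)"
    by (rule kron_carrier[OF Delta_carrier[OF p] one_carrier_mat])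
  have b: "kron (1\<^sub>m p) (Delta q \<phi>) \<in> carrier_mat (p*q) (p*q)"
    by (rule kron_carrier[OF one_carrier_mat Delta_carrier[OF q]])
  show ?thesis unfolding DeltaGamma_def using a b by simp
qed

lemma DG_index: "p \<ge> 1 \<Longrightarrow> q \<ge> 1 \<Longrightarrow> i < p*q \<Longrightarrow> j < p*q \<Longrightarrow>
   DeltaGamma p q \<theta> \<phi> $$ (i,j) = kron (Delta p \<theta>) (1\<^sub>m q) $$ (i,j) + kron (1\<^sub>m p) (Delta q \<phi>) $$ (i,j)"
proof -
  assume p: "p \<ge> 1" and q: "q \<ge> 1" and i: "i < p*q" and j: "j < p*q"
  have d: "dim_row (kron (1\<^sub>m p) (Delta q \<phi>)) = p*q" "dim_col (kron (1\<^sub>m p) (Delta q \<phi>)) = p*q"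
    using Delta_dims[OF q] by simp_all
  show ?thesis unfolding DeltaGamma_def by (rule index_add_mat(1)) (simp_all only: d i j)
qed

lemma DG_rowsum:
  assumes p: "p \<ge> 1" and q: "q \<ge> 1" and i: "i < p*q"
  shows "(\<Sum>j\<in>{0..<p*q}. norm (DeltaGamma p q \<theta> \<phi> $$ (i,j))) \<le> 4"
proof -
  have qp: "q > 0" using q by simp
  have idq: "i div q < p" using i by (simp add: less_mult_imp_div_less)
  have imq: "i mod q < q" using qp by simp
  have "(\<Sum>j\<in>{0..<p*q}. norm (DeltaGamma p q \<theta> \<phi> $$ (i,j)))
     \<le> (\<Sum>j\<in>{0..<p*q}. norm (kron (Delta p \<theta>) (1\<^sub>m q) $$ (i,j)) + norm (kron (1\<^sub>m p) (Delta q \<phi>) $$ (i,j)))"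
  proof (intro sum_mono)
    fix j assume "j \<in> {0..<p*q}"
    hence j: "j < p*q" by simp
    show "norm (DeltaGamma p q \<theta> \<phi> $$ (i,j)) \<le> norm (kron (Delta p \<theta>) (1\<^sub>m q) $$ (i,j)) + norm (kron (1\<^sub>m p) (Delta q \<phi>) $$ (i,j))"
      unfolding DG_index[OF p q i j] by (rule norm_triangle_ineq)
  qed
  also have "\<dots> = (\<Sum>a\<in>{0..<p}. norm (Delta p \<theta> $$ (i div q, a))) + (\<Sum>b\<in>{0..<q}. norm (Delta q \<phi> $$ (i mod q, b)))"
    unfolding sum.distrib kron1_rowsum[OF Delta_carrier[OF p] i] kron2_rowsum[OF Delta_carrier[OF q] i] ..
  also have "\<dots> \<le> 2 + 2"
    by (intro add_mono Delta_rowsum p q idq imq)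
  finally show ?thesis by simp
qed

lemma cp_nonzero: "A \<in> carrier_mat n n \<Longrightarrow> char_poly A \<noteq> 0"
  using degree_monic_char_poly[of A n] by auto

lemma DG_root_bound:
  assumes p: "p \<ge> 1" and q: "q \<ge> 1" and z: "z \<in># proots (char_poly (DeltaGamma p q \<theta> \<phi>))"
  shows "norm z \<le> 4"
proof -
  let ?A = "DeltaGamma p q \<theta> \<phi>"
  have A: "?A \<in> carrier_mat (p*q) (p*q)" by (rule DG_carrier[OF p q])
  have "poly (char_poly ?A) z = 0" using z cp_nonzero[OF A] by simp
  hence "eigenvalue ?A z" using eigenvalue_root_char_poly[OF A] by simp
  then obtain v where v: "v \<in> carrier_vec (p*q)" "v \<noteq> 0\<^sub>v (p*q)" "?A *\<^sub>v v = z \<cdot>\<^sub>v v"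
    unfolding eigenvalue_def eigenvector_def using A by auto
  show ?thesis by (rule gersh[OF A v DG_rowsum[OF p q]])
qed

lemma kv_smult1: "kv (c \<cdot>\<^sub>v x) y = c \<cdot>\<^sub>v kv x y"
  by (rule eq_vecI) (auto simp: kv_def less_mult_imp_div_less)

lemma kv_smult2: "kv x (c \<cdot>\<^sub>v y) = c \<cdot>\<^sub>v kv x y"
proof (rule eq_vecI)
  fix i assume i: "i < dim_vec (c \<cdot>\<^sub>v kv x y)"
  hence "dim_vec y > 0" by (cases "dim_vec y") (auto simp: kv_def)
  thus "kv x (c \<cdot>\<^sub>v y) $ i = (c \<cdot>\<^sub>v kv x y) $ i" using i by (auto simp: kv_def)
qed (simp add: kv_def)

lemma DG_root:
  assumes p: "p \<ge> 1" and q: "q \<ge> 1" and ca: "cis (real p * \<alpha>) = cis \<theta>" and cb: "cis (real q * \<beta>) = cis \<phi>"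
  shows "complex_of_real (2*cos \<alpha> + 2*cos \<beta>) \<in># proots (char_poly (DeltaGamma p q \<theta> \<phi>))"
proof -
  let ?A = "DeltaGamma p q \<theta> \<phi>"
  have A: "?A \<in> carrier_mat (p*q) (p*q)" by (rule DG_carrier[OF p q])
  define x where "x = vec p (\<lambda>m. cis (real m * \<alpha>))"
  define y where "y = vec q (\<lambda>m. cis (real m * \<beta>))"
  have dx: "dim_vec x = p" and dy: "dim_vec y = q" by (auto simp: x_def y_def)
  have vc: "kv x y \<in> carrier_vec (p*q)" using dx dy by (simp add: kv_def)
  have "?A *\<^sub>v kv x y = kron (Delta p \<theta>) (1\<^sub>m q) *\<^sub>v kv x y + kron (1\<^sub>m p) (Delta q \<phi>) *\<^sub>v kv x y"
    unfolding DeltaGamma_def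
    by (rule add_mult_distrib_mat_vec[OF kron_carrier[OF Delta_carrier[OF p] one_carrier_mat]
        kron_carrier[OF one_carrier_mat Delta_carrier[OF q]] vc])
  also have "\<dots> = kv (Delta p \<theta> *\<^sub>v x) y + kv x (Delta q \<phi> *\<^sub>v y)"
    by (simp add: kron1_mult[OF Delta_carrier[OF p] dx dy] kron2_mult[OF Delta_carrier[OF q] dx dy])
  also have "\<dots> = complex_of_real (2*cos \<alpha>) \<cdot>\<^sub>v kv x y + complex_of_real (2*cos \<beta>) \<cdot>\<^sub>v kv x y"
    unfolding x_def y_def Delta_eig[OF p ca] Delta_eig[OF q cb] kv_smult1 kv_smult2 ..
  also have "\<dots> = complex_of_real (2*cos \<alpha> + 2*cos \<beta>) \<cdot>\<^sub>v kv x y"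
    by (simp add: add_smult_distrib_vec)
  finally have ev: "?A *\<^sub>v kv x y = complex_of_real (2*cos \<alpha> + 2*cos \<beta>) \<cdot>\<^sub>v kv x y" .
  have "kv x y $ 0 = 1" using p q dx dy by (simp add: kv_def x_def y_def)
  moreover have "0 < p*q" using p q by simp
  ultimately have nz: "kv x y \<noteq> 0\<^sub>v (p*q)" by auto
  have "eigenvalue ?A (complex_of_real (2*cos \<alpha> + 2*cos \<beta>))"
    unfolding eigenvalue_def eigenvector_def using A vc nz ev by auto
  hence "poly (char_poly ?A) (complex_of_real (2*cos \<alpha> + 2*cos \<beta>)) = 0"
    using eigenvalue_root_char_poly[OF A] by simp
  thus ?thesis using cp_nonzero[OF A] by simp
qed



lemma cis_shift: "n \<in> \<int> \<Longrightarrow> cis (x + 2*pi * n) = cis x"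
  by (simp add: cis_mult[symmetric])

lemma angle_choice:
  shows "\<exists>\<theta>\<in>{0..pi}. \<exists>\<alpha>'. cos \<alpha>' = cos \<alpha> \<and> cis (real r * \<alpha>') = cis \<theta>"
proof -
  define x where "x = real r * \<alpha>"
  define y where "y = x / (2*pi)"
  define t where "t = 2*pi*frac y"
  have t0: "0 \<le> t" and t1: "t < 2*pi" unfolding t_def using frac_ge_0[of y] frac_lt_1[of y] by auto
  have xt: "x = t + 2*pi * of_int \<lfloor>y\<rfloor>" unfolding t_def frac_def y_def by (simp add: algebra_simps)
  have ct: "cis x = cis t" unfolding xt by (rule cis_shift) simp
  show ?thesis
  proof (cases "t \<le> pi")
    case True
    thus ?thesis using t0 ct unfolding x_def by auto
  next
    case False
    have "cis (real r * (-\<alpha>)) = cis (-x)" unfolding x_def by simp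
    also have "\<dots> = cis (-t + 2*pi * of_int (-\<lfloor>y\<rfloor>))" unfolding xt by (simp add: algebra_simps)
    also have "\<dots> = cis (-t)" by (rule cis_shift) simp
    also have "\<dots> = cis (2*pi - t)" using cis_shift[of 1 "-t"] by simp
    finally have "cis (real r * (-\<alpha>)) = cis (2*pi - t)" .
    moreover have "2*pi - t \<in> {0..pi}" using False t1 by auto
    ultimately show ?thesis by (intro bexI[of _ "2*pi - t"] exI[of _ "-\<alpha>"]) auto
  qed
qed

lemma ev_facts:
  assumes p: "p \<ge> 1" and q: "q \<ge> 1"
  shows "length (ordered_eigenvalues (DeltaGamma p q \<theta> \<phi>)) = p*q"
    "sorted (ordered_eigenvalues (DeltaGamma p q \<theta> \<phi>))"
    "\<And>x. x \<in> set (ordered_eigenvalues (DeltaGamma p q \<theta> \<phi>)) \<Longrightarrow> -4 \<le> x \<and> x \<le> 4"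
proof -
  let ?A = "DeltaGamma p q \<theta> \<phi>"
  have A: "?A \<in> carrier_mat (p*q) (p*q)" by (rule DG_carrier[OF p q])
  show "length (ordered_eigenvalues ?A) = p*q"
  proof -
    have "length (ordered_eigenvalues ?A) = size (mset (ordered_eigenvalues ?A))" by simp
    also have "\<dots> = size (proots (char_poly ?A))" unfolding ordered_eigenvalues_def by simp
    also have "\<dots> = p*q" using degree_monic_char_poly[OF A] by (simp add: size_proots_complex)
    finally show ?thesis .
  qed
  show "sorted (ordered_eigenvalues ?A)" unfolding ordered_eigenvalues_def by simp
  fix x assume "x \<in> set (ordered_eigenvalues ?A)"
  then obtain z where z: "z \<in># proots (char_poly ?A)" "x = Re z" unfolding ordered_eigenvalues_def by auto
  have "norm z \<le> 4" by (rule DG_root_bound[OF p q z(1)])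
  moreover have "\<bar>Re z\<bar> \<le> norm z" by (rule abs_Re_le_cmod)
  ultimately show "-4 \<le> x \<and> x \<le> 4" using z(2) by linarith
qed

lemma ev_exists:
  assumes p: "p \<ge> 1" and q: "q \<ge> 1" and c: "-4 \<le> c" "c \<le> 4"
  shows "\<exists>\<theta>\<in>{0..pi}. \<exists>\<phi>\<in>{0..pi}. c \<in> set (ordered_eigenvalues (DeltaGamma p q \<theta> \<phi>))"
proof -
  define \<alpha> where "\<alpha> = arccos (c/4)"
  have ca: "cos \<alpha> = c/4" unfolding \<alpha>_def using c by (intro cos_arccos) auto
  obtain \<theta> \<alpha>1 where th: "\<theta> \<in> {0..pi}" "cos \<alpha>1 = cos \<alpha>" "cis (real p * \<alpha>1) = cis \<theta>"
    using angle_choice[where r=p and \<alpha>=\<alpha>] by blast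
  obtain \<phi> \<alpha>2 where ph: "\<phi> \<in> {0..pi}" "cos \<alpha>2 = cos \<alpha>" "cis (real q * \<alpha>2) = cis \<phi>"
    using angle_choice[where r=q and \<alpha>=\<alpha>] by blast
  have "complex_of_real (2*cos \<alpha>1 + 2*cos \<alpha>2) \<in># proots (char_poly (DeltaGamma p q \<theta> \<phi>))"
    by (rule DG_root[OF p q th(3) ph(3)])
  moreover have "2*cos \<alpha>1 + 2*cos \<alpha>2 = c" using th(2) ph(2) ca by simp
  ultimately have "complex_of_real c \<in># proots (char_poly (DeltaGamma p q \<theta> \<phi>))" by simp
  hence "Re (complex_of_real c) \<in> Re ` set_mset (proots (char_poly (DeltaGamma p q \<theta> \<phi>)))" by blast
  hence "c \<in> set (ordered_eigenvalues (DeltaGamma p q \<theta> \<phi>))" unfolding ordered_eigenvalues_def by simp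
  thus ?thesis using th(1) ph(1) by blast
qed



lemma band_mem: "\<theta> \<in> {0..pi} \<Longrightarrow> \<phi> \<in> {0..pi} \<Longrightarrow> lam p q j \<theta> \<phi> \<in> band p q j"
  unfolding band_def by blast

theorem mainTheorem12:
  fixes p q :: nat
  assumes "p \<ge> 1" and "q \<ge> 1"
  shows "(\<Union>j\<in>{1..p*q}. band p q j) = {-4..4}
    \<and> (\<forall>j. 1 \<le> j \<and> j < p * q \<longrightarrow> Sup (band p q j) \<ge> Inf (band p q (j+1)))"
proof -
  note p = assms(1) and q = assms(2)
  let ?L = "\<lambda>\<theta> \<phi>. ordered_eigenvalues (DeltaGamma p q \<theta> \<phi>)"
  have lamL: "lam p q j \<theta> \<phi> = ?L \<theta> \<phi> ! (j - 1)" for j \<theta> \<phi> unfolding lam_def ..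
  have inset: "lam p q j \<theta> \<phi> \<in> set (?L \<theta> \<phi>)" if "1 \<le> j" "j \<le> p*q" for j \<theta> \<phi>
    unfolding lamL using that ev_facts(1)[OF p q, of \<theta> \<phi>] by (intro nth_mem) simp
  have bnd: "x \<in> {-4..4}" if "x \<in> band p q j" "1 \<le> j" "j \<le> p*q" for x j
  proof -
    from that obtain \<theta> \<phi> where xe: "x = lam p q j \<theta> \<phi>" unfolding band_def by blast
    have "-4 \<le> lam p q j \<theta> \<phi> \<and> lam p q j \<theta> \<phi> \<le> 4" by (rule ev_facts(3)[OF p q inset[OF that(2,3)]])
    thus ?thesis using xe by auto
  qed
  have cover: "\<exists>j \<theta> \<phi>. 1 \<le> j \<and> j \<le> p*q \<and> \<theta> \<in> {0..pi} \<and> \<phi> \<in> {0..pi} \<and> lam p q j \<theta> \<phi> = c"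
    if cc: "-4 \<le> c" "c \<le> 4" for c
  proof -
    obtain \<theta> \<phi> where tp: "\<theta> \<in> {0..pi}" "\<phi> \<in> {0..pi}" "c \<in> set (?L \<theta> \<phi>)"
      using ev_exists[OF p q cc] by blast
    then obtain i where i: "i < length (?L \<theta> \<phi>)" "?L \<theta> \<phi> ! i = c" by (auto simp: in_set_conv_nth)
    have "lam p q (i+1) \<theta> \<phi> = c" using i lamL by simp
    moreover have "i + 1 \<le> p*q" using i ev_facts(1)[OF p q] by simp
    ultimately show ?thesis using tp by (intro exI[of _ "i+1"] exI[of _ \<theta>] exI[of _ \<phi>]) auto
  qed
  have part1: "(\<Union>j\<in>{1..p*q}. band p q j) = {-4..4}"
  proof
    show "(\<Union>j\<in>{1..p*q}. band p q j) \<subseteq> {-4..4}" using bnd by auto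
  next
    show "{-4..4} \<subseteq> (\<Union>j\<in>{1..p*q}. band p q j)"
    proof
      fix c :: real assume "c \<in> {-4..4}"
      hence "-4 \<le> c" "c \<le> 4" by auto
      from cover[OF this] obtain j \<theta> \<phi> where h: "1 \<le> j" "j \<le> p*q" "\<theta> \<in> {0..pi}" "\<phi> \<in> {0..pi}" "lam p q j \<theta> \<phi> = c"
        by blast
      have "c \<in> band p q j" using band_mem[OF h(3,4), of p q j] h(5) by simp
      moreover have "j \<in> {1..p*q}" using h(1,2) by simp
      ultimately show "c \<in> (\<Union>j\<in>{1..p*q}. band p q j)" by blast
    qed
  qed
  have part2: "Sup (band p q j) \<ge> Inf (band p q (j+1))" if j: "1 \<le> j" "j < p*q" for j
  proof (rule ccontr)
    assume "\<not> ?thesis"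
    hence lt: "Sup (band p q j) < Inf (band p q (j+1))" by simp
    have m1: "lam p q j 0 0 \<in> band p q j" by (rule band_mem) auto
    have m2: "lam p q (j+1) 0 0 \<in> band p q (j+1)" by (rule band_mem) auto
    have ba1: "bdd_above (band p q j)" using bnd[of _ j] j by (intro bdd_aboveI[of _ 4]) auto
    have bb2: "bdd_below (band p q (j+1))" using bnd[of _ "j+1"] j by (intro bdd_belowI[of _ "-4"]) auto
    have s1: "x \<le> Sup (band p q j)" if "x \<in> band p q j" for x using cSup_upper[OF that ba1] .
    have s2: "Inf (band p q (j+1)) \<le> x" if "x \<in> band p q (j+1)" for x using cInf_lower[OF that bb2] .
    define c where "c = (Sup (band p q j) + Inf (band p q (j+1))) / 2"
    have "-4 \<le> Sup (band p q j)" using s1[OF m1] bnd[OF m1] j by auto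
    moreover have "Inf (band p q (j+1)) \<le> 4" using s2[OF m2] bnd[OF m2] j by auto
    ultimately have c4: "-4 \<le> c" "c \<le> 4" using lt unfolding c_def by auto
    obtain \<theta> \<phi> where tp: "\<theta> \<in> {0..pi}" "\<phi> \<in> {0..pi}" "c \<in> set (?L \<theta> \<phi>)"
      using ev_exists[OF p q c4] by blast
    then obtain i where i: "i < length (?L \<theta> \<phi>)" "?L \<theta> \<phi> ! i = c" by (auto simp: in_set_conv_nth)
    have len: "length (?L \<theta> \<phi>) = p*q" by (rule ev_facts(1)[OF p q])
    have so: "sorted (?L \<theta> \<phi>)" by (rule ev_facts(2)[OF p q])
    show False
    proof (cases "i \<le> j - 1")
      case True
      have "c \<le> ?L \<theta> \<phi> ! (j-1)" using sorted_nth_mono[OF so True] i j len by simp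
      also have "\<dots> = lam p q j \<theta> \<phi>" using lamL by simp
      also have "\<dots> \<le> Sup (band p q j)" using tp by (intro s1 band_mem)
      finally show False using lt unfolding c_def by simp
    next
      case False
      have "Inf (band p q (j+1)) \<le> lam p q (j+1) \<theta> \<phi>" using tp by (intro s2 band_mem)
      also have "\<dots> = ?L \<theta> \<phi> ! j" using lamL by simp
      also have "\<dots> \<le> c" using sorted_nth_mono[OF so _ i(1)] False i by simp
      finally show False using lt unfolding c_def by simp
    qed
  qed
  show ?thesis using part1 part2 by blast
qed


end
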